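(* If $\mathcal{H}=(V,\mathcal{E})$ is a twin-free hypergraph, then $|V|\leq (TC(\mathcal{H}))^{vc^*(\mathcal{H})}+1$.
   Context: A hypergraph $\mathcal{H}=(V,\mathcal{E})$ (finite) is twin-free if for any two distinct vertices there is a hyperedge containing exactly one of them. A test cover of $\mathcal{H}$ is a set $\mathcal{C}\subseteq\mathcal{E}$ such that every vertex lies in some edge of $\mathcal{C}$ and for every pair $x,y$ of distinct vertices some edge of $\mathcal{C}$ contains exactly one of $x,y$; $TC(\mathcal{H})$ is the minimum size of a test cover. For $X\subseteq V$, the projection is $\mathcal{H}_{|X}=\{e\cap X: e\in\mathcal{E}\}$; $X$ is shattered if $|\mathcal{H}_{|X}|=2^{|X|}$; the VC dimension $vc(\mathcal{H})$ is the maximum size of a shattered set. The dual hypergraph $\mathcal{H}^*$ has the hyperedges of $\mathcal{H}$ as vertices and, for each vertex $v$ of $\mathcal{H}$, a hyperedge consisting of the hyperedges of $\mathcal{H}$ containing $v$; the dual VC dimension is $vc^*(\mathcal{H})=vc(\mathcal{H}^* )$. *)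

theory Defs
  imports Main
begin

definition hypergraph :: "'a set \<Rightarrow> 'a set set \<Rightarrow> bool" where
  "hypergraph V E \<longleftrightarrow> finite V \<and> E \<subseteq> Pow V"

definition twin_free :: "'a set \<Rightarrow> 'a set set \<Rightarrow> bool" where
  "twin_free V E \<longleftrightarrow> (\<forall>x\<in>V. \<forall>y\<in>V. x \<noteq> y \<longrightarrow> (\<exists>e\<in>E. (x \<in> e) \<noteq> (y \<in> e)))"

definition test_cover :: "'a set \<Rightarrow> 'a set set \<Rightarrow> 'a set set \<Rightarrow> bool" where
  "test_cover V E C \<longleftrightarrow> C \<subseteq> E \<and> (\<forall>v\<in>V. \<exists>e\<in>C. v \<in> e)
     \<and> (\<forall>x\<in>V. \<forall>y\<in>V. x \<noteq> y \<longrightarrow> (\<exists>e\<in>C. (x \<in> e) \<noteq> (y \<in> e)))"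

definition TC :: "'a set \<Rightarrow> 'a set set \<Rightarrow> nat" where
  "TC V E = (LEAST k. \<exists>C. test_cover V E C \<and> card C = k)"

definition projection :: "'b set set \<Rightarrow> 'b set \<Rightarrow> 'b set set" where
  "projection F S = (\<lambda>f. f \<inter> S) ` F"

definition shattered :: "'b set set \<Rightarrow> 'b set \<Rightarrow> bool" where
  "shattered F S \<longleftrightarrow> card (projection F S) = 2 ^ card S"

definition vc :: "'b set \<Rightarrow> 'b set set \<Rightarrow> nat" where
  "vc X F = Max {card S | S. S \<subseteq> X \<and> shattered F S}"

text \<open>Dual hypergraph: vertices are the hyperedges, and for each vertex v a hyperedge
  consisting of all hyperedges containing v.\<close>
definition dual_edges :: "'a set \<Rightarrow> 'a set set \<Rightarrow> 'a set set set" where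
  "dual_edges V E = (\<lambda>v. {e \<in> E. v \<in> e}) ` V"

definition vc_dual :: "'a set \<Rightarrow> 'a set set \<Rightarrow> nat" where
  "vc_dual V E = vc E (dual_edges V E)"

end

theory Submission
  imports Defs
begin

definition sh :: "'b set set \<Rightarrow> 'b set \<Rightarrow> bool" where
  "sh F S \<longleftrightarrow> (\<forall>T\<subseteq>S. \<exists>f\<in>F. f \<inter> S = T)"

lemma pajor:
  assumes "finite X"
  shows "F \<subseteq> Pow X \<Longrightarrow> card F \<le> card {S. S \<subseteq> X \<and> sh F S}"
  using assms
proof (induction X arbitrary: F rule: finite_induct)
  case empty
  then have "F \<subseteq> {{}}" by auto
  show ?case
  proof (cases "F = {}")
    case True then show ?thesis by simp
  next
    case False
    with \<open>F \<subseteq> {{}}\<close> have "F = {{}}" by blast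
    then have "sh F {}" by (auto simp: sh_def)
    then have "{S. S \<subseteq> {} \<and> sh F S} = {{}}" by auto
    then show ?thesis using \<open>F = {{}}\<close> by simp
  qed
next
  case (insert x X)
  define F0 where "F0 = {f\<in>F. x \<notin> f}"
  define Fx where "Fx = {f\<in>F. x \<in> f}"
  define F1 where "F1 = (\<lambda>f. f - {x}) ` F"
  define F2 where "F2 = {A. A \<subseteq> X \<and> A \<in> F \<and> insert x A \<in> F}"
  have finF: "finite F" using insert.prems insert.hyps(1) finite_subset by (metis finite_Pow_iff finite_insert)
  have F1sub: "F1 \<subseteq> Pow X" using insert.prems unfolding F1_def by auto
  have F2sub: "F2 \<subseteq> Pow X" unfolding F2_def by auto
  have cF: "card F = card F0 + card Fx"
  proof -
    have "F = F0 \<union> Fx" "F0 \<inter> Fx = {}" unfolding F0_def Fx_def by auto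
    moreover have "finite F0" "finite Fx" using finF unfolding F0_def Fx_def by auto
    ultimately show ?thesis by (metis card_Un_disjoint)
  qed
  have F1eq: "F1 = F0 \<union> (\<lambda>f. f - {x}) ` Fx"
  proof -
    have "F = F0 \<union> Fx" unfolding F0_def Fx_def by auto
    then have "F1 = (\<lambda>f. f - {x}) ` F0 \<union> (\<lambda>f. f - {x}) ` Fx" unfolding F1_def by (simp add: image_Un)
    moreover have "(\<lambda>f. f - {x}) ` F0 = F0"
    proof -
      have "\<And>f. f \<in> F0 \<Longrightarrow> f - {x} = f" unfolding F0_def by auto
      then show ?thesis by (simp add: image_cong)
    qed
    ultimately show ?thesis by simp
  qed
  have injx: "inj_on (\<lambda>f. f - {x}) Fx"
  proof (rule inj_onI)
    fix a b assume "a \<in> Fx" "b \<in> Fx" "a - {x} = b - {x}"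
    then have "insert x (a - {x}) = insert x (b - {x})" by simp
    then show "a = b" using \<open>a \<in> Fx\<close> \<open>b \<in> Fx\<close> unfolding Fx_def by auto
  qed
  have int: "F0 \<inter> (\<lambda>f. f - {x}) ` Fx = F2"
  proof
    show "F0 \<inter> (\<lambda>f. f - {x}) ` Fx \<subseteq> F2"
    proof
      fix A assume A: "A \<in> F0 \<inter> (\<lambda>f. f - {x}) ` Fx"
      then obtain f where f: "f \<in> Fx" "A = f - {x}" by auto
      have "insert x A = f" using f unfolding Fx_def by auto
      moreover have "A \<subseteq> X" using A insert.prems unfolding F0_def by auto
      ultimately show "A \<in> F2" using A f unfolding F2_def F0_def Fx_def by auto
    qed
  next
    show "F2 \<subseteq> F0 \<inter> (\<lambda>f. f - {x}) ` Fx"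
    proof
      fix A assume A: "A \<in> F2"
      then have "x \<notin> A" using insert.hyps(2) unfolding F2_def by auto
      then have "A = insert x A - {x}" by auto
      then show "A \<in> F0 \<inter> (\<lambda>f. f - {x}) ` Fx" using A \<open>x \<notin> A\<close> unfolding F2_def F0_def Fx_def by auto
    qed
  qed
  have "card F1 + card F2 = card F"
  proof -
    have "finite F0" "finite ((\<lambda>f. f - {x}) ` Fx)" using finF unfolding F0_def Fx_def by auto
    then have "card F1 + card F2 = card F0 + card ((\<lambda>f. f - {x}) ` Fx)"
      using card_Un_Int[of F0 "(\<lambda>f. f - {x}) ` Fx"] F1eq int by simp
    also have "\<dots> = card F0 + card Fx" using card_image[OF injx] by simp
    finally show ?thesis using cF by simp
  qed
  define A1 where "A1 = {S. S \<subseteq> X \<and> sh F1 S}"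
  define A2 where "A2 = {S. S \<subseteq> X \<and> sh F2 S}"
  have c1: "card F1 \<le> card A1" using insert.IH F1sub unfolding A1_def by blast
  have c2: "card F2 \<le> card A2" using insert.IH F2sub unfolding A2_def by blast
  have A1sub: "A1 \<subseteq> {S. S \<subseteq> insert x X \<and> sh F S}"
  proof
    fix S assume "S \<in> A1"
    then have S: "S \<subseteq> X" "sh F1 S" unfolding A1_def by auto
    have "sh F S" unfolding sh_def
    proof (intro allI impI)
      fix T assume "T \<subseteq> S"
      then obtain g where "g \<in> F1" "g \<inter> S = T" using S unfolding sh_def by blast
      then obtain f where "f \<in> F" "g = f - {x}" unfolding F1_def by auto
      moreover have "x \<notin> S" using S insert.hyps(2) by auto
      ultimately show "\<exists>f\<in>F. f \<inter> S = T" using \<open>g \<inter> S = T\<close> by auto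
    qed
    then show "S \<in> {S. S \<subseteq> insert x X \<and> sh F S}" using S by auto
  qed
  have A2sub: "insert x ` A2 \<subseteq> {S. S \<subseteq> insert x X \<and> sh F S}"
  proof
    fix S' assume "S' \<in> insert x ` A2"
    then obtain S where S: "S \<subseteq> X" "sh F2 S" "S' = insert x S" unfolding A2_def by auto
    have "sh F (insert x S)" unfolding sh_def
    proof (intro allI impI)
      fix T assume T: "T \<subseteq> insert x S"
      then have "T - {x} \<subseteq> S" by auto
      then obtain A where A: "A \<in> F2" "A \<inter> S = T - {x}" using S unfolding sh_def by blast
      have xA: "x \<notin> A" using A insert.hyps(2) unfolding F2_def by auto
      show "\<exists>f\<in>F. f \<inter> insert x S = T"
      proof (cases "x \<in> T")
        case True
        then have "insert x A \<inter> insert x S = T" using A T by auto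
        then show ?thesis using A unfolding F2_def by blast
      next
        case False
        then have "A \<inter> insert x S = T" using A T xA by auto
        then show ?thesis using A unfolding F2_def by blast
      qed
    qed
    then show "S' \<in> {S. S \<subseteq> insert x X \<and> sh F S}" using S by auto
  qed
  have disj: "A1 \<inter> insert x ` A2 = {}" using insert.hyps(2) unfolding A1_def by auto
  have finA: "finite {S. S \<subseteq> insert x X \<and> sh F S}" using insert.hyps(1) by simp
  have injA2: "inj_on (insert x) A2"
  proof (rule inj_onI)
    fix a b assume "a \<in> A2" "b \<in> A2" "insert x a = insert x b"
    moreover have "x \<notin> a" "x \<notin> b" using \<open>a \<in> A2\<close> \<open>b \<in> A2\<close> insert.hyps(2) unfolding A2_def by auto
    ultimately show "a = b" by (metis Diff_insert_absorb)
  qed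
  have fA1: "finite A1" using finA A1sub finite_subset by blast
  have fA2: "finite (insert x ` A2)" using finA A2sub finite_subset by blast
  have "card A1 + card A2 = card A1 + card (insert x ` A2)" using card_image[OF injA2] by simp
  also have "\<dots> = card (A1 \<union> insert x ` A2)"
    using card_Un_disjoint[OF fA1 fA2 disj] by simp
  finally have "card A1 + card A2 = card (A1 \<union> insert x ` A2)" .
  also have "\<dots> \<le> card {S. S \<subseteq> insert x X \<and> sh F S}"
    using finA A1sub A2sub by (intro card_mono) auto
  finally show ?case using c1 c2 \<open>card F1 + card F2 = card F\<close> by linarith
qed

lemma small_subsets:
  assumes "finite C"
  shows "card {S. S \<subseteq> C \<and> card S \<le> d} \<le> card C ^ d + 1"
proof -
  define L where "L = {xs. set xs \<subseteq> C \<and> length xs = d}"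
  have cL: "card L = card C ^ d" unfolding L_def by (rule card_lists_length_eq[OF assms])
  have finL: "finite L" unfolding L_def using assms by (simp add: finite_lists_length_eq)
  have sub: "{S. S \<subseteq> C \<and> card S \<le> d} \<subseteq> insert {} (set ` L)"
  proof
    fix S assume S: "S \<in> {S. S \<subseteq> C \<and> card S \<le> d}"
    show "S \<in> insert {} (set ` L)"
    proof (cases "S = {}")
      case True then show ?thesis by simp
    next
      case False
      have fS: "finite S" using S assms finite_subset by blast
      then obtain xs where xs: "set xs = S" "distinct xs" using finite_distinct_list by blast
      have lx: "length xs = card S" using xs distinct_card by fastforce
      have "xs \<noteq> []" using xs False by auto
      define ys where "ys = xs @ replicate (d - length xs) (hd xs)"
      have "set ys = S" unfolding ys_def using xs \<open>xs \<noteq> []\<close>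
        by (auto simp: hd_in_set)
      moreover have "length ys = d" unfolding ys_def using lx S by auto
      ultimately show ?thesis unfolding L_def using S by auto
    qed
  qed
  have "card {S. S \<subseteq> C \<and> card S \<le> d} \<le> card (insert {} (set ` L))"
    using sub finL by (intro card_mono) auto
  also have "\<dots> \<le> card (set ` L) + 1" using finL by (simp add: card_insert_le_m1 card_insert_if)
  also have "\<dots> \<le> card L + 1" using card_image_le finL by auto
  finally show ?thesis using cL by simp
qed

theorem proposition1:
  fixes V :: "'a set" and E :: "'a set set"
  assumes "hypergraph V E"
    and "twin_free V E"
    and "\<exists>C. test_cover V E C"
  shows "card V \<le> (TC V E) ^ (vc_dual V E) + 1"
proof -
  have finV: "finite V" and EV: "E \<subseteq> Pow V" using assms(1) unfolding hypergraph_def by auto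
  have finE: "finite E" using finV EV finite_subset by blast
  have "\<exists>C. test_cover V E C \<and> card C = TC V E"
  proof -
    obtain C0 where "test_cover V E C0" using assms(3) by blast
    then have "\<exists>k. \<exists>C. test_cover V E C \<and> card C = k" by blast
    then have "\<exists>C. test_cover V E C \<and> card C = (LEAST k. \<exists>C. test_cover V E C \<and> card C = k)"
      by (rule LeastI_ex)
    then show ?thesis unfolding TC_def .
  qed
  then obtain C where C: "test_cover V E C" "card C = TC V E" by blast
  have CE: "C \<subseteq> E" using C unfolding test_cover_def by auto
  have finC: "finite C" using CE finE finite_subset by blast
  define tr where "tr = (\<lambda>v. {e\<in>C. v \<in> e})"
  define F where "F = tr ` V"
  have inj: "inj_on tr V"
  proof (rule inj_onI)
    fix x y assume "x \<in> V" "y \<in> V" "tr x = tr y"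
    show "x = y"
    proof (rule ccontr)
      assume "x \<noteq> y"
      then obtain e where "e \<in> C" "(x \<in> e) \<noteq> (y \<in> e)"
        using C(1) \<open>x \<in> V\<close> \<open>y \<in> V\<close> unfolding test_cover_def by blast
      then show False using \<open>tr x = tr y\<close> unfolding tr_def by blast
    qed
  qed
  have cV: "card V = card F" unfolding F_def using card_image inj by metis
  have Fsub: "F \<subseteq> Pow C" unfolding F_def tr_def by auto
  have p: "card F \<le> card {S. S \<subseteq> C \<and> sh F S}" using pajor[OF finC Fsub] .
  define d where "d = vc_dual V E"
  have bound: "{S. S \<subseteq> C \<and> sh F S} \<subseteq> {S. S \<subseteq> C \<and> card S \<le> d}"
  proof
    fix S assume S: "S \<in> {S. S \<subseteq> C \<and> sh F S}"
    then have SC: "S \<subseteq> C" and shS: "sh F S" by auto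
    have finS: "finite S" using SC finC finite_subset by blast
    have "projection (dual_edges V E) S = Pow S"
    proof
      show "projection (dual_edges V E) S \<subseteq> Pow S" unfolding projection_def by auto
    next
      show "Pow S \<subseteq> projection (dual_edges V E) S"
      proof
        fix T assume "T \<in> Pow S"
        then obtain f where f: "f \<in> F" "f \<inter> S = T" using shS unfolding sh_def by blast
        then obtain v where v: "v \<in> V" "f = tr v" unfolding F_def by auto
        have "{e \<in> E. v \<in> e} \<inter> S = T" using f v SC CE unfolding tr_def by auto
        moreover have "{e \<in> E. v \<in> e} \<in> dual_edges V E" using v unfolding dual_edges_def by auto
        ultimately show "T \<in> projection (dual_edges V E) S" unfolding projection_def by force
      qed
    qed
    then have "shattered (dual_edges V E) S" unfolding shattered_def using finS by (simp add: card_Pow)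
    then have mem: "card S \<in> {card S | S. S \<subseteq> E \<and> shattered (dual_edges V E) S}" using SC CE by auto
    have "finite {card S | S. S \<subseteq> E \<and> shattered (dual_edges V E) S}"
    proof -
      have "{card S | S. S \<subseteq> E \<and> shattered (dual_edges V E) S} \<subseteq> card ` Pow E" by auto
      then show ?thesis using finE finite_subset by blast
    qed
    then have "card S \<le> d" using mem unfolding d_def vc_dual_def vc_def by (simp add: Max_ge)
    then show "S \<in> {S. S \<subseteq> C \<and> card S \<le> d}" using SC by auto
  qed
  have "card {S. S \<subseteq> C \<and> sh F S} \<le> card {S. S \<subseteq> C \<and> card S \<le> d}"
    using bound finC by (intro card_mono) auto
  also have "\<dots> \<le> card C ^ d + 1" using small_subsets[OF finC] .
  finally show ?thesis using p cV C(2) d_def by simp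
qed

end
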